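(* For all $\mathbf u\in D(\tilde{\mathbf L})$ we have $\operatorname{Re}(\tilde{\mathbf L}\mathbf u,\mathbf u)_{\tilde{\mathcal H}}\le0$.
   Context: Radial functions on $\mathbb B^6_1=\{x\in\mathbb R^6:|x|<1\}$ are identified with their profiles in $\rho=|x|$, and $'$ denotes $\partial_\rho$. $D(\tilde{\mathbf L})=\{\mathbf u=(u_1,u_2)\in C^3(\overline{\mathbb B^6_1})\times C^2(\overline{\mathbb B^6_1}): u_1,u_2\text{ radial}\}$ and \[\tilde{\mathbf L}\mathbf u(\rho)=\begin{pmatrix}-\rho u_1'(\rho)-u_1(\rho)+u_2(\rho)\\ u_1''(\rho)+\frac5\rho u_1'(\rho)-\rho u_2'(\rho)-2u_2(\rho)\end{pmatrix}.\] On $D(\tilde{\mathbf L})$, \[(\mathbf u,\mathbf v)_{\tilde{\mathcal H}}=2\int_0^1u_1''\overline{v_1''}\rho^5d\rho+10\int_0^1u_1'\overline{v_1'}\rho^3d\rho+2\int_0^1u_2'\overline{v_2'}\rho^5d\rho+u_1(1)\overline{v_1(1)}+u_2(1)\overline{v_2(1)}.\] *)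

theory Defs
  imports "HOL-Analysis.Analysis"
begin

text \<open>k-times continuously differentiable on a (closed) set S, derivatives taken
  within S (so that one-sided derivatives up to the boundary are used).\<close>
primrec Ck_on :: "nat \<Rightarrow> ('a::euclidean_space) set \<Rightarrow> ('a \<Rightarrow> complex) \<Rightarrow> bool" where
  "Ck_on 0 S f = continuous_on S f"
| "Ck_on (Suc k) S f =
     (\<exists>D. (\<forall>x\<in>S. (f has_derivative (\<lambda>h. \<Sum>i\<in>Basis. (h \<bullet> i) *\<^sub>R D i x)) (at x within S))
          \<and> (\<forall>i\<in>Basis. Ck_on k S (D i)))"

definition radial_on :: "('a::real_normed_vector) set \<Rightarrow> ('a \<Rightarrow> 'b) \<Rightarrow> bool" where
  "radial_on S u \<longleftrightarrow> (\<forall>x\<in>S. \<forall>y\<in>S. norm x = norm y \<longrightarrow> u x = u y)"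

abbreviation ball6 :: "(real^6) set" where "ball6 \<equiv> cball 0 1"

definition profile :: "(real^6 \<Rightarrow> complex) \<Rightarrow> real \<Rightarrow> complex" where
  "profile u \<rho> = u (\<rho> *\<^sub>R axis 1 1)"

definition dr :: "(real \<Rightarrow> complex) \<Rightarrow> real \<Rightarrow> complex" where
  "dr f \<rho> = vector_derivative f (at \<rho> within {0..1})"

definition D_Ltilde :: "((real^6 \<Rightarrow> complex) \<times> (real^6 \<Rightarrow> complex)) set" where
  "D_Ltilde = {(u1, u2). Ck_on 3 ball6 u1 \<and> Ck_on 2 ball6 u2 \<and> radial_on ball6 u1 \<and> radial_on ball6 u2}"

definition Ltilde :: "(real \<Rightarrow> complex) \<times> (real \<Rightarrow> complex) \<Rightarrow> (real \<Rightarrow> complex) \<times> (real \<Rightarrow> complex)" where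
  "Ltilde u = (let u1 = fst u; u2 = snd u in
     ((\<lambda>\<rho>. - (of_real \<rho>) * dr u1 \<rho> - u1 \<rho> + u2 \<rho>),
      (\<lambda>\<rho>. dr (dr u1) \<rho> + of_real (5 / \<rho>) * dr u1 \<rho> - of_real \<rho> * dr u2 \<rho> - 2 * u2 \<rho>)))"

definition ipH :: "(real \<Rightarrow> complex) \<times> (real \<Rightarrow> complex) \<Rightarrow> (real \<Rightarrow> complex) \<times> (real \<Rightarrow> complex) \<Rightarrow> complex" where
  "ipH u v =
     2 * integral {0..1} (\<lambda>\<rho>. dr (dr (fst u)) \<rho> * cnj (dr (dr (fst v)) \<rho>) * of_real (\<rho> ^ 5))
   + 10 * integral {0..1} (\<lambda>\<rho>. dr (fst u) \<rho> * cnj (dr (fst v) \<rho>) * of_real (\<rho> ^ 3))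
   + 2 * integral {0..1} (\<lambda>\<rho>. dr (snd u) \<rho> * cnj (dr (snd v) \<rho>) * of_real (\<rho> ^ 5))
   + fst u 1 * cnj (fst v 1) + snd u 1 * cnj (snd v 1)"

end

theory Submission
  imports Defs
begin

lemma Ck_cont: "Ck_on k S f \<Longrightarrow> continuous_on S f"
  by (cases k) (auto intro: has_derivative_continuous_on)

lemma prof_deriv:
  assumes "Ck_on (Suc k) ball6 f"
  shows "\<exists>g. Ck_on k ball6 g \<and> (\<forall>\<rho>\<in>{0..1}. (profile f has_vector_derivative profile g \<rho>) (at \<rho> within {0..1}))"
proof -
  obtain D where D: "\<forall>x\<in>ball6. (f has_derivative (\<lambda>h. \<Sum>i\<in>Basis. (h \<bullet> i) *\<^sub>R D i x)) (at x within ball6)"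
    and Dk: "\<forall>i\<in>Basis. Ck_on k ball6 (D i)" using assms by auto
  define e :: "real^6" where "e = axis 1 1"
  have eB: "e \<in> Basis" unfolding e_def by simp
  define p where "p = (\<lambda>\<rho>::real. \<rho> *\<^sub>R e)"
  have pf: "profile f = f \<circ> p" by (auto simp: profile_def p_def e_def)
  have sub: "p ` {0..1} \<subseteq> ball6" using eB by (auto simp: p_def)
  have "\<forall>\<rho>\<in>{0..1}. (profile f has_vector_derivative profile (D e) \<rho>) (at \<rho> within {0..1})"
  proof
    fix \<rho> :: real assume r: "\<rho> \<in> {0..1}"
    have dp: "(p has_vector_derivative e) (at \<rho> within {0..1})"
      unfolding p_def by (auto intro!: derivative_eq_intros)
    have "p \<rho> \<in> ball6" using sub r by blast
    hence "(f has_derivative (\<lambda>h. \<Sum>i\<in>Basis. (h \<bullet> i) *\<^sub>R D i (p \<rho>))) (at (p \<rho>) within p ` {0..1})"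
      using D has_derivative_subset sub by blast
    from vector_derivative_diff_chain_within[OF dp this]
    have "((f \<circ> p) has_vector_derivative (\<Sum>i\<in>Basis. (e \<bullet> i) *\<^sub>R D i (p \<rho>))) (at \<rho> within {0..1})" .
    moreover have "(\<Sum>i\<in>Basis. (e \<bullet> i) *\<^sub>R D i (p \<rho>)) = D e (p \<rho>)"
      by (subst sum.remove[OF _ eB]) (auto simp: inner_Basis eB intro!: sum.neutral split: if_splits)
    ultimately show "(profile f has_vector_derivative profile (D e) \<rho>) (at \<rho> within {0..1})"
      by (simp add: pf profile_def p_def e_def)
  qed
  thus ?thesis using Dk eB by blast
qed


lemma drI: "(f has_vector_derivative f') (at x within {0..1}) \<Longrightarrow> x \<in> {0..1::real} \<Longrightarrow> dr f x = f'"
  unfolding dr_def using vector_derivative_within_cbox[of 0 1 x f f'] by (simp add: cbox_interval)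

lemma vd_cont: "(\<And>x. x \<in> S \<Longrightarrow> (f has_vector_derivative f' x) (at x within S)) \<Longrightarrow> continuous_on S f"
  unfolding has_vector_derivative_def by (rule has_derivative_continuous_on)

lemma dr_eq:
  assumes "\<And>x. x \<in> {0..1::real} \<Longrightarrow> (f has_vector_derivative f' x) (at x within {0..1})"
  shows "\<And>x. x \<in> {0..1} \<Longrightarrow> dr f x = f' x"
  using assms drI by blast

lemma dr_dr_eq:
  assumes "\<And>x. x \<in> {0..1::real} \<Longrightarrow> (f has_vector_derivative f' x) (at x within {0..1})"
    and "\<And>x. x \<in> {0..1::real} \<Longrightarrow> (f' has_vector_derivative f'' x) (at x within {0..1})"
  shows "\<And>x. x \<in> {0..1} \<Longrightarrow> dr (dr f) x = f'' x"
proof -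
  fix x :: real assume x: "x \<in> {0..1}"
  have "(dr f has_vector_derivative f'' x) (at x within {0..1})"
    by (rule has_vector_derivative_transform[OF x _ assms(2)[OF x]]) (use dr_eq[OF assms(1)] in auto)
  thus "dr (dr f) x = f'' x" using drI x by blast
qed


lemma qreal:
  fixes a b c d e :: real
  shows "- (a^2) - 5*b^2 - c^2 + 2*a*c - b*d - d^2 + e*d + a*e + 5*b*e - c*e - 2*e^2 \<le> 0"
proof -
  have "- (a^2) - 5*b^2 - c^2 + 2*a*c - b*d - d^2 + e*d + a*e + 5*b*e - c*e - 2*e^2
     = - ((a-c-e/2)^2) - 5*(b + d/10 - e/2)^2 - 19/20*(d - 5*e/19)^2 - 33/76*e^2"
    by (simp add: power2_eq_square algebra_simps)
  also have "\<dots> \<le> 0" using zero_le_power2[of "a-c-e/2"] zero_le_power2[of "b + d/10 - e/2"] zero_le_power2[of "d - 5*e/19"] zero_le_power2[of e] by linarith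
  finally show ?thesis .
qed
lemma qcomplex:
  fixes a b c d e :: complex
  shows "Re(-(a*cnj a) - 5*(b*cnj b) - c*cnj c + 2*(a*cnj c)) + Re((-b - d + e)*cnj d) + Re((a + 5*b - c - 2*e)*cnj e) \<le> 0"
  using qreal[of "Re a" "Re b" "Re c" "Re d" "Re e"] qreal[of "Im a" "Im b" "Im c" "Im d" "Im e"]
  by (simp add: power2_eq_square algebra_simps)


lemma analytic:
  fixes w w1 w2 w3 v v1 v2 :: "real \<Rightarrow> complex"
  assumes dw: "\<And>x. x \<in> {0..1} \<Longrightarrow> (w has_vector_derivative w1 x) (at x within {0..1})"
    and dw1: "\<And>x. x \<in> {0..1} \<Longrightarrow> (w1 has_vector_derivative w2 x) (at x within {0..1})"
    and dw2: "\<And>x. x \<in> {0..1} \<Longrightarrow> (w2 has_vector_derivative w3 x) (at x within {0..1})"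
    and cw3: "continuous_on {0..1} w3"
    and dv: "\<And>x. x \<in> {0..1} \<Longrightarrow> (v has_vector_derivative v1 x) (at x within {0..1})"
    and dv1: "\<And>x. x \<in> {0..1} \<Longrightarrow> (v1 has_vector_derivative v2 x) (at x within {0..1})"
    and cv2: "continuous_on {0..1} v2"
  shows "Re (ipH (Ltilde (w, v)) (w, v)) \<le> 0"
proof -
  define I where "I = {0..1::real}"
  note cont = vd_cont[OF dw] vd_cont[OF dw1] vd_cont[OF dw2] vd_cont[OF dv] vd_cont[OF dv1]
  have drw: "\<And>x. x \<in> I \<Longrightarrow> dr w x = w1 x" using dr_eq[OF dw] I_def by blast
  have drv: "\<And>x. x \<in> I \<Longrightarrow> dr v x = v1 x" using dr_eq[OF dv] I_def by blast
  have ddw: "\<And>x. x \<in> I \<Longrightarrow> dr (dr w) x = w2 x" using dr_dr_eq[OF dw dw1] I_def by blast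
  define L1 where "L1 = fst (Ltilde (w, v))"
  define L2 where "L2 = snd (Ltilde (w, v))"
  define A1 where "A1 = (\<lambda>\<rho>. - 2 * w1 \<rho> - of_real \<rho> * w2 \<rho> + v1 \<rho>)"
  define A2 where "A2 = (\<lambda>\<rho>. - 3 * w2 \<rho> - of_real \<rho> * w3 \<rho> + v2 \<rho>)"
  have L1eq: "\<And>x. x \<in> I \<Longrightarrow> L1 x = - of_real x * w1 x - w x + v x"
    by (simp add: L1_def Ltilde_def drw)
  have dL1: "\<And>x. x \<in> I \<Longrightarrow> (L1 has_vector_derivative A1 x) (at x within I)"
  proof -
    fix x assume x: "x \<in> I"
    have "((\<lambda>x. - of_real x * w1 x - w x + v x) has_vector_derivative A1 x) (at x within I)"
      unfolding A1_def
      by (rule derivative_eq_intros dw1[folded I_def] dw[folded I_def] dv[folded I_def] x refl)+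
         (simp add: algebra_simps)
    thus "(L1 has_vector_derivative A1 x) (at x within I)"
      by (rule has_vector_derivative_transform[OF x L1eq, rotated])
  qed
  have dA1: "\<And>x. x \<in> I \<Longrightarrow> (A1 has_vector_derivative A2 x) (at x within I)"
    unfolding A1_def A2_def
    by (rule derivative_eq_intros dw1[folded I_def] dw2[folded I_def] dv1[folded I_def] refl | assumption)+
       (simp add: algebra_simps)
  have drL1: "\<And>x. x \<in> I \<Longrightarrow> dr L1 x = A1 x" using dr_eq[OF dL1[unfolded I_def]] I_def by blast
  have ddrL1: "\<And>x. x \<in> I \<Longrightarrow> dr (dr L1) x = A2 x"
    using dr_dr_eq[OF dL1[unfolded I_def] dA1[unfolded I_def]] I_def by blast
  define B1 where "B1 = (\<lambda>\<rho>. w3 \<rho> + of_real (5 / \<rho>) * w2 \<rho> - of_real (5 / \<rho>^2) * w1 \<rho> - 3 * v1 \<rho> - of_real \<rho> * v2 \<rho>)"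
  have L2eq: "\<And>x. x \<in> I \<Longrightarrow> L2 x = w2 x + of_real (5 / x) * w1 x - of_real x * v1 x - 2 * v x"
    by (simp add: L2_def Ltilde_def drw ddw drv)
  have dL2: "\<And>x. x \<in> I - {0} \<Longrightarrow> (L2 has_vector_derivative B1 x) (at x within I)"
  proof -
    fix x assume x: "x \<in> I - {0}"
    hence xI: "x \<in> I" and x0: "x \<noteq> 0" by auto
    have "((\<lambda>x. w2 x + of_real (5 / x) * w1 x - of_real x * v1 x - 2 * v x) has_vector_derivative B1 x) (at x within I)"
      unfolding B1_def
      by (rule derivative_eq_intros dw2[folded I_def] dw1[folded I_def] dv1[folded I_def] dv[folded I_def] xI x0 refl)+
         (simp add: algebra_simps power2_eq_square divide_simps x0)
    thus "(L2 has_vector_derivative B1 x) (at x within I)"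
      by (rule has_vector_derivative_transform[OF xI L2eq, rotated])
  qed
  have drL2: "\<And>x. x \<in> I - {0} \<Longrightarrow> dr L2 x = B1 x" using drI dL2 I_def by blast
  define h1 where "h1 = (\<lambda>\<rho>. A2 \<rho> * cnj (w2 \<rho>) * of_real (\<rho>^5))"
  define h2 where "h2 = (\<lambda>\<rho>. A1 \<rho> * cnj (w1 \<rho>) * of_real (\<rho>^3))"
  define h3 where "h3 = (\<lambda>\<rho>. (of_real (\<rho>^5) * w3 \<rho> + 5 * of_real (\<rho>^4) * w2 \<rho> - 5 * of_real (\<rho>^3) * w1 \<rho>
        - 3 * of_real (\<rho>^5) * v1 \<rho> - of_real (\<rho>^6) * v2 \<rho>) * cnj (v1 \<rho>))"
  have Lt: "Ltilde (w, v) = (L1, L2)" by (simp add: L1_def L2_def)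
  have i1: "integral I (\<lambda>\<rho>. dr (dr L1) \<rho> * cnj (dr (dr w) \<rho>) * of_real (\<rho> ^ 5)) = integral I h1"
    by (rule integral_spike[of "{}"]) (auto simp: h1_def ddrL1 ddw)
  have i2: "integral I (\<lambda>\<rho>. dr L1 \<rho> * cnj (dr w \<rho>) * of_real (\<rho> ^ 3)) = integral I h2"
    by (rule integral_spike[of "{}"]) (auto simp: h2_def drL1 drw)
  have i3: "integral I (\<lambda>\<rho>. dr L2 \<rho> * cnj (dr v \<rho>) * of_real (\<rho> ^ 5)) = integral I h3"
  proof (rule integral_spike[of "{0}"])
    fix x assume x: "x \<in> I - {0}"
    hence x0: "x \<noteq> 0" by auto
    have "B1 x * of_real (x^5) = of_real (x^5) * w3 x + 5 * of_real (x^4) * w2 x - 5 * of_real (x^3) * w1 x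
        - 3 * of_real (x^5) * v1 x - of_real (x^6) * v2 x"
      using x0 by (simp add: B1_def field_simps power2_eq_square eval_nat_numeral)
    thus "h3 x = dr L2 x * cnj (dr v x) * of_real (x ^ 5)"
      using x by (simp add: h3_def drL2 drv mult.commute mult.left_commute)
  qed auto
  have ipH_eq: "ipH (Ltilde (w, v)) (w, v) = 2 * integral I h1 + 10 * integral I h2 + 2 * integral I h3
      + L1 1 * cnj (w 1) + L2 1 * cnj (v 1)"
    using i1 i2 i3 by (simp add: ipH_def Lt I_def)
  have cA1: "continuous_on I A1" unfolding A1_def I_def using cont by (intro continuous_intros)
  have cA2: "continuous_on I A2" unfolding A2_def I_def using cont cw3 cv2 by (intro continuous_intros)
  have ch1: "continuous_on I h1" unfolding h1_def using cont cA2 I_def by (intro continuous_intros) auto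
  have ch2: "continuous_on I h2" unfolding h2_def using cont cA1 I_def by (intro continuous_intros) auto
  have ch3: "continuous_on I h3" unfolding h3_def using cont cw3 cv2 I_def by (intro continuous_intros) auto
  have int1: "h1 integrable_on I" using ch1 I_def integrable_continuous_interval by blast
  have int2: "h2 integrable_on I" using ch2 I_def integrable_continuous_interval by blast
  have int3: "h3 integrable_on I" using ch3 I_def integrable_continuous_interval by blast
  define H where "H = (\<lambda>\<rho>. 2 * h1 \<rho> + 10 * h2 \<rho> + 2 * h3 \<rho>)"
  have HI: "(H has_integral (2 * integral I h1 + 10 * integral I h2 + 2 * integral I h3)) I"
    unfolding H_def
    by (intro has_integral_add has_integral_mult_right integrable_integral int1 int2 int3)
  have ReHI: "((\<lambda>\<rho>. Re (H \<rho>)) has_integral Re (2 * integral I h1 + 10 * integral I h2 + 2 * integral I h3)) I"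
    using has_integral_linear[OF HI bounded_linear_Re] by (simp add: o_def)
  define Fc where "Fc = (\<lambda>\<rho>. - of_real (\<rho>^6) * (w2 \<rho> * cnj (w2 \<rho>)) - 5 * of_real (\<rho>^4) * (w1 \<rho> * cnj (w1 \<rho>))
      - of_real (\<rho>^6) * (v1 \<rho> * cnj (v1 \<rho>)) + 2 * of_real (\<rho>^5) * (w2 \<rho> * cnj (v1 \<rho>)))"
  define Fd where "Fd = (\<lambda>x. - (of_real (6*x^5) * (w2 x * cnj (w2 x)) + of_real (x^6) * (w3 x * cnj (w2 x) + w2 x * cnj (w3 x)))
     - 5 * (of_real (4*x^3) * (w1 x * cnj (w1 x)) + of_real (x^4) * (w2 x * cnj (w1 x) + w1 x * cnj (w2 x)))
     - (of_real (6*x^5) * (v1 x * cnj (v1 x)) + of_real (x^6) * (v2 x * cnj (v1 x) + v1 x * cnj (v2 x)))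
     + 2 * (of_real (5*x^4) * (w2 x * cnj (v1 x)) + of_real (x^5) * (w3 x * cnj (v1 x) + w2 x * cnj (v2 x))))"
  have dFc: "\<And>x. x \<in> I \<Longrightarrow> (Fc has_vector_derivative Fd x) (at x within I)"
    unfolding Fc_def Fd_def
    by (rule derivative_eq_intros dw1[folded I_def] dw2[folded I_def] dv1[folded I_def] refl | assumption)+
       (simp add: algebra_simps)
  have FdH: "\<And>x. Re (Fd x) = Re (H x)"
    by (simp add: Fd_def H_def h1_def h2_def h3_def A1_def A2_def algebra_simps) (simp add: eval_nat_numeral algebra_simps)
  have dF: "\<And>x. x \<in> {0..1} \<Longrightarrow> ((\<lambda>\<rho>. Re (Fc \<rho>)) has_vector_derivative Re (H x)) (at x within {0..1})"
    using bounded_linear.has_vector_derivative[OF bounded_linear_Re dFc] FdH I_def by simp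
  have FI: "((\<lambda>\<rho>. Re (H \<rho>)) has_integral (Re (Fc 1) - Re (Fc 0))) I"
    unfolding I_def by (rule fundamental_theorem_of_calculus[OF _ dF]) auto
  have "Re (2 * integral I h1 + 10 * integral I h2 + 2 * integral I h3) = Re (Fc 1)"
    using has_integral_unique[OF ReHI FI] by (simp add: Fc_def)
  moreover have "L1 1 = - w1 1 - w 1 + v 1" using L1eq[of 1] by (simp add: I_def)
  moreover have "L2 1 = w2 1 + 5 * w1 1 - v1 1 - 2 * v 1" using L2eq[of 1] by (simp add: I_def)
  ultimately have "Re (ipH (Ltilde (w, v)) (w, v)) = Re (-(w2 1 * cnj (w2 1)) - 5 * (w1 1 * cnj (w1 1)) - v1 1 * cnj (v1 1) + 2 * (w2 1 * cnj (v1 1)))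
      + Re ((- w1 1 - w 1 + v 1) * cnj (w 1)) + Re ((w2 1 + 5 * w1 1 - v1 1 - 2 * v 1) * cnj (v 1))"
    unfolding ipH_eq by (simp add: Fc_def)
  also have "\<dots> \<le> 0" by (rule qcomplex)
  finally show ?thesis .
qed

lemma prof_cont:
  assumes "Ck_on k ball6 g" shows "continuous_on {0..1} (profile g)"
proof -
  have c: "continuous_on ball6 g" using Ck_cont assms by blast
  have "continuous_on {0..1} (\<lambda>\<rho>::real. \<rho> *\<^sub>R (axis 1 1 :: real^6))" by (intro continuous_intros)
  moreover have "(\<lambda>\<rho>::real. \<rho> *\<^sub>R (axis 1 1 :: real^6)) ` {0..1} \<subseteq> ball6"
    by (auto simp: norm_Basis)
  ultimately show ?thesis unfolding profile_def
    using continuous_on_compose2[OF c] by blast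
qed

theorem mainTheorem7:
  fixes u1 u2 :: "real^6 \<Rightarrow> complex"
  assumes "(u1, u2) \<in> D_Ltilde"
  shows "Re (ipH (Ltilde (profile u1, profile u2)) (profile u1, profile u2)) \<le> 0"
proof -
  have c1: "Ck_on (Suc (Suc (Suc 0))) ball6 u1" and c2: "Ck_on (Suc (Suc 0)) ball6 u2"
    using assms by (auto simp: D_Ltilde_def numeral_eq_Suc)
  obtain g1 where g1: "Ck_on (Suc (Suc 0)) ball6 g1"
    "\<forall>\<rho>\<in>{0..1}. (profile u1 has_vector_derivative profile g1 \<rho>) (at \<rho> within {0..1})"
    using prof_deriv[OF c1] by blast
  obtain g2 where g2: "Ck_on (Suc 0) ball6 g2"
    "\<forall>\<rho>\<in>{0..1}. (profile g1 has_vector_derivative profile g2 \<rho>) (at \<rho> within {0..1})"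
    using prof_deriv[OF g1(1)] by blast
  obtain g3 where g3: "Ck_on 0 ball6 g3"
    "\<forall>\<rho>\<in>{0..1}. (profile g2 has_vector_derivative profile g3 \<rho>) (at \<rho> within {0..1})"
    using prof_deriv[OF g2(1)] by blast
  obtain k1 where k1: "Ck_on (Suc 0) ball6 k1"
    "\<forall>\<rho>\<in>{0..1}. (profile u2 has_vector_derivative profile k1 \<rho>) (at \<rho> within {0..1})"
    using prof_deriv[OF c2] by blast
  obtain k2 where k2: "Ck_on 0 ball6 k2"
    "\<forall>\<rho>\<in>{0..1}. (profile k1 has_vector_derivative profile k2 \<rho>) (at \<rho> within {0..1})"
    using prof_deriv[OF k1(1)] by blast
  show ?thesis
    by (rule analytic[of _ "profile g1" "profile g2" "profile g3" _ "profile k1" "profile k2"])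
       (use g1(2) g2(2) g3(2) k1(2) k2(2) prof_cont[OF g3(1)] prof_cont[OF k2(1)] in auto)
qed

end
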